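(* Let $V\subset\mathbb{R}^d$ be a finite antichain, $p\in S_V$, $v\in D_p$ with $v_i=p_i$, and assume $v$ is not an $i$-witness for $p$. Then there is a minimum $u\in D_p$ such that $T_p(u)\subsetneq T_p(v)$ and $i\in T_p(v)\setminus T_p(u)$.
   Context: For $x,y\in\mathbb{R}^d$, $x\le y$ (dominance order) means $x_i\le y_i$ for all $i$; $y\rhd x$ means $y_i>x_i$ for all $i$; $y\rhd_i x$ means $y_i=x_i$ and $y_j>x_j$ for all $j\neq i$. $V\subset\mathbb{R}^d$ is a finite antichain in the dominance order (elements are called minima). The orthogonal surface $S_V$ is the topological boundary of $\langle V\rangle=\{x: x\ge v\text{ for some }v\in V\}$; equivalently $p\in S_V$ iff there is $v\in V$ with $v\le p$ and no $w\in V$ with $p\rhd w$. For $p\in S_V$, $D_p=\{v\in V:v\le p\}$ and for $v\in D_p$, $T_p(v)=\{i: p_i=v_i\}$. For $p\in S_V$, a minimum $v\in D_p$ is an $i$-witness for $p$ if there is $q\in S_V$ with $v\le p\le q$ and $q\rhd_i v$. *)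

theory Defs
  imports "HOL-Analysis.Analysis"
begin

definition dom_le :: "real^'d \<Rightarrow> real^'d \<Rightarrow> bool" where
  "dom_le x y \<longleftrightarrow> (\<forall>i. x$i \<le> y$i)"

definition strictly_dom :: "real^'d \<Rightarrow> real^'d \<Rightarrow> bool" where
  "strictly_dom y x \<longleftrightarrow> (\<forall>i. y$i > x$i)"

definition strictly_dom_except :: "real^'d \<Rightarrow> 'd \<Rightarrow> real^'d \<Rightarrow> bool" where
  "strictly_dom_except y i x \<longleftrightarrow> y$i = x$i \<and> (\<forall>j. j \<noteq> i \<longrightarrow> y$j > x$j)"

definition antichain_dom :: "(real^'d) set \<Rightarrow> bool" where
  "antichain_dom V \<longleftrightarrow> (\<forall>v\<in>V. \<forall>w\<in>V. dom_le v w \<longrightarrow> v = w)"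

definition orth_surface :: "(real^'d) set \<Rightarrow> (real^'d) set" where
  "orth_surface V = {p. (\<exists>v\<in>V. dom_le v p) \<and> \<not>(\<exists>w\<in>V. strictly_dom p w)}"

definition Dset :: "(real^'d) set \<Rightarrow> real^'d \<Rightarrow> (real^'d) set" where
  "Dset V p = {v\<in>V. dom_le v p}"

definition Tset :: "real^'d \<Rightarrow> real^'d \<Rightarrow> 'd set" where
  "Tset p v = {i. p$i = v$i}"

definition is_witness :: "(real^'d) set \<Rightarrow> 'd \<Rightarrow> real^'d \<Rightarrow> real^'d \<Rightarrow> bool" where
  "is_witness V i p v \<longleftrightarrow> v \<in> Dset V p \<and>
     (\<exists>q\<in>orth_surface V. dom_le v p \<and> dom_le p q \<and> strictly_dom_except q i v)"

end

theory Submission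
  imports Defs
begin

theorem lemma4p6:
  fixes V :: "(real^'d) set" and p v :: "real^'d" and i :: 'd
  assumes "finite V" and "antichain_dom V"
    and "p \<in> orth_surface V"
    and "v \<in> Dset V p" and "v$i = p$i"
    and "\<not> is_witness V i p v"
  shows "\<exists>u\<in>Dset V p. Tset p u \<subset> Tset p v \<and> i \<in> Tset p v - Tset p u"
proof -
  define S where "S = (\<lambda>(w,j). w$j - p$j) ` {(w,j). w \<in> V \<and> w$j > p$j}"
  have finS: "finite S" unfolding S_def
    by (rule finite_imageI, rule finite_subset[of _ "V \<times> UNIV"]) (auto simp: assms(1))
  define e where "e = Min (insert 1 S)"
  have epos: "e > 0" unfolding e_def using finS
    by (subst Min_gr_iff) (auto simp: S_def)
  have ele: "e \<le> w$j - p$j" if "w \<in> V" "w$j > p$j" for w j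
  proof -
    have "w$j - p$j \<in> S" unfolding S_def using that by force
    thus ?thesis unfolding e_def using finS by simp
  qed
  define q where "q = (\<chi> j. if j = i then p$i else if p$j = v$j then p$j + e else p$j)"
  have vp: "dom_le v p" "v \<in> V" using assms(4) by (auto simp: Dset_def)
  have pq: "dom_le p q" unfolding dom_le_def q_def using epos by auto
  have sq: "strictly_dom_except q i v" unfolding strictly_dom_except_def q_def
  proof (intro conjI allI impI)
    fix j assume "j \<noteq> i"
    have "v$j \<le> p$j" using vp unfolding dom_le_def by auto
    thus "(\<chi> j. if j = i then p$i else if p$j = v$j then p$j + e else p$j) $ j > v $ j"
      using epos `j \<noteq> i` by auto
  qed (simp add: assms(5))
  have vq: "dom_le v q" using vp(1) pq unfolding dom_le_def by (meson order_trans)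
  have "q \<notin> orth_surface V" using assms(6) vp pq sq assms(4) unfolding is_witness_def by blast
  then obtain w where w: "w \<in> V" "strictly_dom q w"
    using vq vp(2) unfolding orth_surface_def by blast
  have wq: "w$j < q$j" for j using w(2) unfolding strictly_dom_def by auto
  have wp: "dom_le w p" unfolding dom_le_def
  proof
    fix j show "w$j \<le> p$j"
    proof (rule ccontr)
      assume "\<not> w$j \<le> p$j"
      hence "e \<le> w$j - p$j" using ele w(1) by auto
      moreover have "q$j \<le> p$j + e" unfolding q_def using epos by auto
      ultimately show False using wq[of j] by auto
    qed
  qed
  have sub: "Tset p w \<subseteq> Tset p v"
  proof
    fix j assume "j \<in> Tset p w"
    hence pj: "p$j = w$j" by (simp add: Tset_def)
    show "j \<in> Tset p v"
    proof (rule ccontr)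
      assume "j \<notin> Tset p v"
      hence "p$j \<noteq> v$j" by (simp add: Tset_def)
      hence "q$j = p$j" unfolding q_def using assms(5) by auto
      thus False using wq[of j] pj by auto
    qed
  qed
  have iw: "i \<notin> Tset p w" using wq[of i] unfolding Tset_def q_def by auto
  have iv: "i \<in> Tset p v" using assms(5) by (simp add: Tset_def)
  show ?thesis
    by (rule bexI[of _ w]) (use sub iw iv w(1) wp in \<open>auto simp: Dset_def\<close>)
qed

end
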